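(* For $\tau_1,\dots,\tau_{n-1}\in\mathbb{C}$ and $(z_{j,k})_{1\le k<j\le n}$ in a sufficiently small neighbourhood of the origin (principal branches), $$\sum_{\beta\in\Gamma_A}\frac{\prod_{s=1}^{n-1}(\tau_s-\beta_{\underline s})_{\beta_{\overline s}}}{\beta!}z^\beta=\prod_{r=1}^{n-1}\Big(\sum_{s=r}^{n}P_{[r,s]}\Big)^{-\tau_r}.$$
   Context: $(c)_i=c(c+1)\cdots(c+i-1)$. $\Gamma_A=\bigoplus_{1\le j<i\le n}\mathbb{N}\epsilon_{i,j}$; for $\beta\in\Gamma_A$: $\beta_{\underline 1}=0$, $\beta_{\underline i}=\sum_{r=1}^{i-1}\beta_{i,r}$, $\beta_{\overline n}=0$, $\beta_{\overline j}=\sum_{s=j+1}^n\beta_{s,j}$, $\beta!=\prod\beta_{j,k}!$, $z^\beta=\prod z_{j,k}^{\beta_{j,k}}$. Path polynomials: for positive integers $k_1<k_2$, a path is a sequence $k_1=m_0<m_1<\cdots<m_r=k_2$, and $P_{[k_1,k_2]}=\sum_{\text{paths}}(-1)^rz_{m_1,m_0}z_{m_2,m_1}\cdots z_{m_r,m_{r-1}}$; $P_{[k,k]}=1$. *)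

theory Defs
  imports "HOL-Analysis.Analysis"
begin

definition idx_pairs :: "nat \<Rightarrow> (nat \<times> nat) set" where
  "idx_pairs n = {(j,k). 1 \<le> k \<and> k < j \<and> j \<le> n}"

definition Gamma_A :: "nat \<Rightarrow> (nat \<Rightarrow> nat \<Rightarrow> nat) set" where
  "Gamma_A n = {\<beta>. \<forall>j k. \<beta> j k \<noteq> 0 \<longrightarrow> (j,k) \<in> idx_pairs n}"

definition beta_under :: "(nat \<Rightarrow> nat \<Rightarrow> nat) \<Rightarrow> nat \<Rightarrow> nat" where
  "beta_under \<beta> i = (\<Sum>r=1..<i. \<beta> i r)"

definition beta_over :: "nat \<Rightarrow> (nat \<Rightarrow> nat \<Rightarrow> nat) \<Rightarrow> nat \<Rightarrow> nat" where
  "beta_over n \<beta> j = (\<Sum>s=j+1..n. \<beta> s j)"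

definition beta_fact :: "nat \<Rightarrow> (nat \<Rightarrow> nat \<Rightarrow> nat) \<Rightarrow> nat" where
  "beta_fact n \<beta> = (\<Prod>(j,k)\<in>idx_pairs n. fact (\<beta> j k))"

definition z_pow :: "nat \<Rightarrow> (nat \<Rightarrow> nat \<Rightarrow> complex) \<Rightarrow> (nat \<Rightarrow> nat \<Rightarrow> nat) \<Rightarrow> complex" where
  "z_pow n z \<beta> = (\<Prod>(j,k)\<in>idx_pairs n. z j k ^ \<beta> j k)"

definition paths :: "nat \<Rightarrow> nat \<Rightarrow> nat list set" where
  "paths k1 k2 = {ms. ms \<noteq> [] \<and> sorted_wrt (<) ms \<and> hd ms = k1 \<and> last ms = k2}"

definition path_poly :: "(nat \<Rightarrow> nat \<Rightarrow> complex) \<Rightarrow> nat \<Rightarrow> nat \<Rightarrow> complex" where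
  "path_poly z k1 k2 =
     (\<Sum>ms\<in>paths k1 k2. (-1) ^ (length ms - 1) *
        (\<Prod>i<length ms - 1. z (ms ! Suc i) (ms ! i)))"

end

theory Submission
  imports Defs
begin


function Lf :: "nat \<Rightarrow> (nat \<Rightarrow> nat \<Rightarrow> complex) \<Rightarrow> nat \<Rightarrow> complex" where
  "Lf n z r = (if n \<le> r then 1 else 1 - (\<Sum>m\<in>{r<..n}. z m r * Lf n z m))"
  by auto
termination by (relation "Wellfounded.measure (\<lambda>(n,z,r). n - r)") auto

declare Lf.simps[simp del]

function Mf :: "nat \<Rightarrow> (nat \<Rightarrow> nat \<Rightarrow> real) \<Rightarrow> nat \<Rightarrow> real" where
  "Mf n w r = (if n \<le> r then 1 else 1 - (\<Sum>m\<in>{r<..n}. w m r / Mf n w m))"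
  by auto
termination by (relation "Wellfounded.measure (\<lambda>(n,z,r). n - r)") auto

declare Mf.simps[simp del]

lemma sorted_hd_last:
  fixes ms :: "nat list"
  assumes "sorted_wrt (<) ms" "ms \<noteq> []" "x \<in> set ms"
  shows "hd ms \<le> x \<and> x \<le> last ms"
  using assms
proof (induction ms)
  case Nil then show ?case by simp
next
  case (Cons a ms)
  then show ?case
  proof (cases "ms = []")
    case False
    have "a < last ms" using Cons.prems(1) False last_in_set[OF False] by auto
    then show ?thesis using Cons False by (auto simp: less_imp_le)
  qed simp
qed

lemma paths_Cons:
  assumes "r < s"
  shows "paths r s = (\<Union>m\<in>{r<..s}. Cons r ` paths m s)"
proof
  show "paths r s \<subseteq> (\<Union>m\<in>{r<..s}. Cons r ` paths m s)"
  proof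
    fix ms assume ms: "ms \<in> paths r s"
    then obtain ms' where e: "ms = r # ms'" 
      unfolding paths_def by (cases ms) auto
    have "ms' \<noteq> []" using ms e assms by (auto simp: paths_def)
    have sw: "sorted_wrt (<) ms'" "\<forall>x\<in>set ms'. r < x" using ms e by (auto simp: paths_def)
    have ls: "last ms' = s" using ms e \<open>ms' \<noteq> []\<close> by (auto simp: paths_def)
    have "r < hd ms'" using sw \<open>ms' \<noteq> []\<close> by auto
    moreover have "hd ms' \<le> s" using sorted_hd_last[OF sw(1) \<open>ms' \<noteq> []\<close>, of "last ms'"] ls \<open>ms' \<noteq> []\<close> by auto
    moreover have "ms' \<in> paths (hd ms') s" using sw ls \<open>ms' \<noteq> []\<close> by (auto simp: paths_def)
    ultimately show "ms \<in> (\<Union>m\<in>{r<..s}. Cons r ` paths m s)" using e by auto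
  qed
next
  show "(\<Union>m\<in>{r<..s}. Cons r ` paths m s) \<subseteq> paths r s"
  proof clarify
    fix m ms' assume m: "m \<in> {r<..s}" and ms': "ms' \<in> paths m s"
    have ne: "ms' \<noteq> []" "sorted_wrt (<) ms'" "hd ms' = m" "last ms' = s" using ms' by (auto simp: paths_def)
    have "\<forall>x\<in>set ms'. r < x" using sorted_hd_last[OF ne(2) ne(1)] ne m by fastforce
    then show "r # ms' \<in> paths r s" using ne by (auto simp: paths_def)
  qed
qed

lemma finite_paths: "finite (paths r s)"
proof -
  have "paths r s \<subseteq> {ms. set ms \<subseteq> {r..s} \<and> length ms \<le> Suc s}"
  proof clarify
    fix ms assume ms: "ms \<in> paths r s"
    then have ne: "ms \<noteq> []" "sorted_wrt (<) ms" "hd ms = r" "last ms = s" by (auto simp: paths_def)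
    have sub: "set ms \<subseteq> {r..s}" using sorted_hd_last[OF ne(2) ne(1)] ne by auto
    have "distinct ms" using ne(2) strict_sorted_iff by blast
    then have "length ms = card (set ms)" by (simp add: distinct_card)
    also have "\<dots> \<le> card {r..s}" using sub by (intro card_mono) auto
    also have "\<dots> \<le> Suc s" by simp
    finally show "set ms \<subseteq> {r..s} \<and> length ms \<le> Suc s" using sub by simp
  qed
  moreover have "finite {ms. set ms \<subseteq> {r..s} \<and> length ms \<le> Suc s}"
    by (intro finite_lists_length_le) auto
  ultimately show ?thesis by (rule finite_subset)
qed

lemma paths_refl: "paths r r = {[r]}"
proof -
  have "ms = [r]" if "ms \<in> paths r r" for ms
  proof -
    have ne: "ms \<noteq> []" "sorted_wrt (<) ms" "hd ms = r" "last ms = r" using that by (auto simp: paths_def)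
    obtain ms' where e: "ms = r # ms'" using ne by (cases ms) auto
    show ?thesis
    proof (cases "ms' = []")
      case False
      then have "last ms' \<in> set ms'" by simp
      then have "r < last ms'" using ne(2) e by auto
      then show ?thesis using ne(4) e False by simp
    qed (use e in simp)
  qed
  then show ?thesis by (auto simp: paths_def)
qed

lemma paths_empty: "s < r \<Longrightarrow> paths r s = {}"
proof (rule ccontr)
  assume "s < r" "paths r s \<noteq> {}"
  then obtain ms where "ms \<in> paths r s" by blast
  then have ne: "ms \<noteq> []" "sorted_wrt (<) ms" "hd ms = r" "last ms = s" by (auto simp: paths_def)
  have "hd ms \<le> last ms" using sorted_hd_last[OF ne(2) ne(1) last_in_set[OF ne(1)]] by simp
  then show False using ne \<open>s < r\<close> by simp
qed

lemma path_poly_refl: "path_poly z r r = 1"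
  by (simp add: path_poly_def paths_refl)

lemma path_poly_empty: "s < r \<Longrightarrow> path_poly z r s = 0"
  by (simp add: path_poly_def paths_empty)

lemma path_poly_step:
  assumes "r < s"
  shows "path_poly z r s = - (\<Sum>m\<in>{r<..s}. z m r * path_poly z m s)"
proof -
  define F where "F = (\<lambda>ms. (-1::complex) ^ (length ms - 1) * (\<Prod>i<length ms - 1. z (ms ! Suc i) (ms ! i)))"
  have "path_poly z r s = sum F (\<Union>m\<in>{r<..s}. Cons r ` paths m s)"
    unfolding path_poly_def F_def paths_Cons[OF assms] ..
  also have "\<dots> = (\<Sum>m\<in>{r<..s}. sum F (Cons r ` paths m s))"
  proof (rule sum.UNION_disjoint)
    show "\<forall>i\<in>{r<..s}. \<forall>j\<in>{r<..s}. i \<noteq> j \<longrightarrow> Cons r ` paths i s \<inter> Cons r ` paths j s = {}"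
      by (auto simp: paths_def)
  qed (auto simp: finite_paths)
  also have "\<dots> = (\<Sum>m\<in>{r<..s}. - (z m r * path_poly z m s))"
  proof (rule sum.cong[OF refl])
    fix m assume m: "m \<in> {r<..s}"
    have "sum F (Cons r ` paths m s) = (\<Sum>ms\<in>paths m s. F (r # ms))"
      by (subst sum.reindex) auto
    also have "\<dots> = (\<Sum>ms\<in>paths m s. - (z m r * ((-1) ^ (length ms - 1) * (\<Prod>i<length ms - 1. z (ms ! Suc i) (ms ! i)))))"
    proof (rule sum.cong[OF refl])
      fix ms assume ms: "ms \<in> paths m s"
      then have ne: "ms \<noteq> []" "hd ms = m" by (auto simp: paths_def)
      then obtain k where k: "length ms = Suc k" by (cases ms) auto
      have h0: "ms ! 0 = m" using ne by (simp add: hd_conv_nth)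
      have "F (r # ms) = (-1) ^ Suc k * (\<Prod>i<Suc k. z ((r#ms) ! Suc i) ((r#ms) ! i))"
        by (simp add: F_def k)
      also have "\<dots> = (-1) ^ Suc k * (z m r * (\<Prod>i<k. z (ms ! Suc i) (ms ! i)))"
        by (subst prod.lessThan_Suc_shift) (simp add: h0)
      finally show "F (r # ms) = - (z m r * ((-1) ^ (length ms - 1) * (\<Prod>i<length ms - 1. z (ms ! Suc i) (ms ! i))))"
        by (simp add: k)
    qed
    also have "\<dots> = - (z m r * path_poly z m s)"
      by (simp add: path_poly_def sum_distrib_left sum_negf)
    finally show "sum F (Cons r ` paths m s) = - (z m r * path_poly z m s)" .
  qed
  finally show ?thesis by (simp add: sum_negf)
qed

lemma path_sum_Lf:
  assumes "r \<le> n"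
  shows "(\<Sum>s=r..n. path_poly z r s) = Lf n z r"
  using assms
proof (induction "n - r" arbitrary: r rule: less_induct)
  case less
  show ?case
  proof (cases "n \<le> r")
    case True
    then have "r = n" using less.prems by simp
    then show ?thesis by (simp add: path_poly_refl Lf.simps)
  next
    case False
    have split: "{r..n} = insert r {r<..n}" using less.prems by auto
    have "(\<Sum>s=r..n. path_poly z r s) = 1 + (\<Sum>s\<in>{r<..n}. path_poly z r s)"
      by (simp add: split path_poly_refl)
    also have "(\<Sum>s\<in>{r<..n}. path_poly z r s) = (\<Sum>s\<in>{r<..n}. - (\<Sum>m\<in>{r<..n}. z m r * path_poly z m s))"
    proof (rule sum.cong[OF refl])
      fix s assume s: "s \<in> {r<..n}"
      have "(\<Sum>m\<in>{r<..n}. z m r * path_poly z m s) = (\<Sum>m\<in>{r<..s}. z m r * path_poly z m s)"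
        by (rule sum.mono_neutral_right) (use s in \<open>auto simp: path_poly_empty\<close>)
      then show "path_poly z r s = - (\<Sum>m\<in>{r<..n}. z m r * path_poly z m s)"
        using s path_poly_step[of r s z] by simp
    qed
    also have "\<dots> = - (\<Sum>m\<in>{r<..n}. \<Sum>s\<in>{r<..n}. z m r * path_poly z m s)"
      by (subst sum.swap) (simp only: sum_negf)
    also have "\<dots> = - (\<Sum>m\<in>{r<..n}. z m r * (\<Sum>s\<in>{r<..n}. path_poly z m s))"
      by (simp only: sum_distrib_left)
    also have "\<dots> = - (\<Sum>m\<in>{r<..n}. z m r * Lf n z m)"
    proof -
      have "(\<Sum>s\<in>{r<..n}. path_poly z m s) = Lf n z m" if m: "m \<in> {r<..n}" for m
      proof -
        have "(\<Sum>s\<in>{r<..n}. path_poly z m s) = (\<Sum>s=m..n. path_poly z m s)"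
          by (rule sum.mono_neutral_right) (use m in \<open>auto simp: path_poly_empty\<close>)
        also have "\<dots> = Lf n z m" using m less.prems by (intro less.hyps) auto
        finally show ?thesis .
      qed
      then show ?thesis by simp
    qed
    finally show ?thesis using False by (simp add: Lf.simps[of n z r])
  qed
qed



definition GS :: "(nat \<times> nat) set \<Rightarrow> (nat \<Rightarrow> nat \<Rightarrow> nat) set" where
  "GS S = {\<beta>. \<forall>j k. \<beta> j k \<noteq> 0 \<longrightarrow> (j,k) \<in> S}"

definition zr :: "(nat \<times> nat) set \<Rightarrow> (nat \<Rightarrow> nat \<Rightarrow> 'a::zero) \<Rightarrow> nat \<Rightarrow> nat \<Rightarrow> 'a" where
  "zr S z = (\<lambda>j k. if (j,k) \<in> S then z j k else 0)"

definition updb :: "(nat \<Rightarrow> nat \<Rightarrow> nat) \<Rightarrow> nat \<Rightarrow> nat \<Rightarrow> nat \<Rightarrow> (nat \<Rightarrow> nat \<Rightarrow> nat)" where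
  "updb \<beta> m a c = (\<lambda>j k. if j = m \<and> k = a then c else \<beta> j k)"

definition dlt :: "nat \<Rightarrow> real" where "dlt n = 1 / (8 * (real n + 1))"

lemma dlt_pos: "dlt n > 0" by (simp add: dlt_def)

lemma n_dlt: "real n * dlt n \<le> 1/8"
  by (simp add: dlt_def field_simps)

lemma finite_idx_pairs: "finite (idx_pairs n)"
proof -
  have "idx_pairs n \<subseteq> {..n} \<times> {..n}" by (auto simp: idx_pairs_def)
  then show ?thesis by (rule finite_subset) auto
qed

lemma GS_bij:
  assumes "(m,a) \<in> S"
  shows "bij_betw (\<lambda>p. updb (snd p) m a (fst p)) ((UNIV::nat set) \<times> GS (S - {(m,a)})) (GS S)"
proof (rule bij_betwI')
  fix x y assume x: "x \<in> (UNIV::nat set) \<times> GS (S - {(m,a)})" and y: "y \<in> (UNIV::nat set) \<times> GS (S - {(m,a)})"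
  obtain c \<beta> where xe: "x = (c,\<beta>)" by (cases x)
  obtain c' \<beta>' where ye: "y = (c',\<beta>')" by (cases y)
  have b0: "\<beta> m a = 0" "\<beta>' m a = 0" using x y xe ye by (auto simp: GS_def)
  show "(updb (snd x) m a (fst x) = updb (snd y) m a (fst y)) = (x = y)"
  proof
    assume h: "updb (snd x) m a (fst x) = updb (snd y) m a (fst y)"
    then have h': "updb \<beta> m a c = updb \<beta>' m a c'" using xe ye by simp
    have "c = c'" using fun_cong[OF fun_cong[OF h', of m], of a] by (simp add: updb_def)
    moreover have "\<beta> = \<beta>'"
    proof (intro ext)
      fix j k show "\<beta> j k = \<beta>' j k"
        using fun_cong[OF fun_cong[OF h', of j], of k] b0 by (cases "j = m \<and> k = a") (auto simp: updb_def)
    qed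
    ultimately show "x = y" using xe ye by simp
  qed simp
next
  fix x assume "x \<in> (UNIV::nat set) \<times> GS (S - {(m,a)})"
  then show "updb (snd x) m a (fst x) \<in> GS S"
    using assms by (auto simp: GS_def updb_def split: prod.splits if_splits)
next
  fix \<beta> assume b: "\<beta> \<in> GS S"
  show "\<exists>x\<in>(UNIV::nat set) \<times> GS (S - {(m, a)}). \<beta> = updb (snd x) m a (fst x)"
  proof (intro bexI)
    show "\<beta> = updb (snd (\<beta> m a, updb \<beta> m a 0)) m a (fst (\<beta> m a, updb \<beta> m a 0))"
      by (intro ext) (auto simp: updb_def)
    show "(\<beta> m a, updb \<beta> m a 0) \<in> (UNIV::nat set) \<times> GS (S - {(m, a)})"
      using b by (auto simp: GS_def updb_def)
  qed
qed

lemma peel: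
  fixes F :: "(nat \<Rightarrow> nat \<Rightarrow> nat) \<Rightarrow> 'a::{topological_comm_monoid_add, t3_space}"
  assumes ma: "(m,a) \<in> S" and sm: "F summable_on GS S"
    and inner: "\<And>c. ((\<lambda>\<beta>. F (updb \<beta> m a c)) has_sum V c) (GS (S - {(m,a)}))"
    and outer: "(V has_sum W) UNIV"
  shows "(F has_sum W) (GS S)"
proof -
  let ?g = "\<lambda>p. updb (snd p) m a (fst p)"
  have bij: "bij_betw ?g (UNIV \<times> GS (S - {(m,a)})) (GS S)" by (rule GS_bij[OF ma])
  have "(\<lambda>x. F (?g x)) summable_on (UNIV \<times> GS (S - {(m,a)}))"
    using summable_on_reindex_bij_betw[OF bij] sm by blast
  then have "((\<lambda>x. F (?g x)) has_sum W) (Sigma UNIV (\<lambda>_. GS (S - {(m,a)})))"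
    by (intro has_sum_SigmaI[where g = V]) (use inner outer in auto)
  then show ?thesis using has_sum_reindex_bij_betw[OF bij] by blast
qed

lemma peel_nonneg:
  fixes F :: "(nat \<Rightarrow> nat \<Rightarrow> nat) \<Rightarrow> real"
  assumes ma: "(m,a) \<in> S" and nn: "\<And>\<beta>. F \<beta> \<ge> 0"
    and inner: "\<And>c. ((\<lambda>\<beta>. F (updb \<beta> m a c)) has_sum V c) (GS (S - {(m,a)}))"
    and outer: "(V has_sum W) UNIV"
  shows "(F has_sum W) (GS S)"
proof -
  let ?g = "\<lambda>p. updb (snd p) m a (fst p)"
  have bij: "bij_betw ?g (UNIV \<times> GS (S - {(m,a)})) (GS S)" by (rule GS_bij[OF ma])
  have "(\<lambda>x. F (?g x)) summable_on (Sigma UNIV (\<lambda>_. GS (S - {(m,a)})))"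
    by (rule summable_on_SigmaI[where g = V]) (use inner outer nn in \<open>auto simp: has_sum_iff\<close>)
  then have "F summable_on GS S"
    using summable_on_reindex_bij_betw[OF bij] by blast
  then show ?thesis by (rule peel[OF ma _ inner outer])
qed

lemma prod_upd1:
  assumes "finite I" "p \<in> I" "\<And>q. q \<in> I \<Longrightarrow> q \<noteq> p \<Longrightarrow> h q = g q" "g p = 1"
  shows "prod h I = h p * prod g I"
proof -
  have "prod h I = h p * prod h (I - {p})" using assms by (simp add: prod.remove)
  also have "prod h (I - {p}) = prod g (I - {p})" using assms(3) by (intro prod.cong) auto
  also have "\<dots> = prod g I" using assms by (simp add: prod.remove)
  finally show ?thesis .
qed

lemma pair_facts:
  assumes "(m,a) \<in> idx_pairs n"
  shows "1 \<le> a" "a < m" "m \<le> n"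
  using assms by (auto simp: idx_pairs_def)

lemma beta_under_upd:
  assumes "(m,a) \<in> idx_pairs n" "\<beta> m a = 0"
  shows "beta_under (updb \<beta> m a c) s = beta_under \<beta> s + (if s = m then c else 0)"
proof -
  have "beta_under (updb \<beta> m a c) s = (\<Sum>r=1..<s. \<beta> s r + (if s = m \<and> r = a then c else 0))"
    unfolding beta_under_def using assms(2) by (intro sum.cong) (auto simp: updb_def)
  also have "\<dots> = beta_under \<beta> s + (\<Sum>r=1..<s. if s = m \<and> r = a then c else 0)"
    by (simp add: sum.distrib beta_under_def)
  also have "(\<Sum>r=1..<s. if s = m \<and> r = a then c else 0) = (if s = m then c else 0)"
    using pair_facts[OF assms(1)] by (cases "s = m") (auto simp: sum.delta')
  finally show ?thesis .
qed

lemma beta_over_upd: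
  assumes "(m,a) \<in> idx_pairs n" "\<beta> m a = 0"
  shows "beta_over n (updb \<beta> m a c) s = beta_over n \<beta> s + (if s = a then c else 0)"
proof -
  have "beta_over n (updb \<beta> m a c) s = (\<Sum>j=s+1..n. \<beta> j s + (if j = m \<and> s = a then c else 0))"
    unfolding beta_over_def using assms(2) by (intro sum.cong) (auto simp: updb_def)
  also have "\<dots> = beta_over n \<beta> s + (\<Sum>j=s+1..n. if j = m \<and> s = a then c else 0)"
    by (simp add: sum.distrib beta_over_def)
  also have "(\<Sum>j=s+1..n. if j = m \<and> s = a then c else 0) = (if s = a then c else 0)"
    using pair_facts[OF assms(1)] by (cases "s = a") (auto simp: sum.delta)
  finally show ?thesis .
qed

lemma beta_fact_upd:
  assumes "(m,a) \<in> idx_pairs n" "\<beta> m a = 0"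
  shows "beta_fact n (updb \<beta> m a c) = fact c * beta_fact n \<beta>"
  unfolding beta_fact_def
  by (subst prod_upd1[OF finite_idx_pairs assms(1), where g = "\<lambda>(j,k). fact (\<beta> j k)"])
     (use assms in \<open>auto simp: updb_def split: if_splits\<close>)

lemma z_pow_upd:
  fixes z :: "nat \<Rightarrow> nat \<Rightarrow> complex"
  assumes "(m,a) \<in> idx_pairs n" "\<beta> m a = 0"
  shows "z_pow n z (updb \<beta> m a c) = z m a ^ c * z_pow n z \<beta>"
  unfolding z_pow_def
  by (subst prod_upd1[OF finite_idx_pairs assms(1), where g = "\<lambda>(j,k). z j k ^ \<beta> j k"])
     (use assms in \<open>auto simp: updb_def split: if_splits\<close>)

definition w_pow :: "nat \<Rightarrow> (nat \<Rightarrow> nat \<Rightarrow> real) \<Rightarrow> (nat \<Rightarrow> nat \<Rightarrow> nat) \<Rightarrow> real" where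
  "w_pow n w \<beta> = (\<Prod>(j,k)\<in>idx_pairs n. w j k ^ \<beta> j k)"

lemma w_pow_upd:
  assumes "(m,a) \<in> idx_pairs n" "\<beta> m a = 0"
  shows "w_pow n w (updb \<beta> m a c) = w m a ^ c * w_pow n w \<beta>"
  unfolding w_pow_def
  by (subst prod_upd1[OF finite_idx_pairs assms(1), where g = "\<lambda>(j,k). w j k ^ \<beta> j k"])
     (use assms in \<open>auto simp: updb_def split: if_splits\<close>)

definition fterm :: "nat \<Rightarrow> (nat \<Rightarrow> complex) \<Rightarrow> (nat \<Rightarrow> nat \<Rightarrow> complex) \<Rightarrow> (nat \<Rightarrow> nat \<Rightarrow> nat) \<Rightarrow> complex" where
  "fterm n \<tau> z \<beta> = (\<Prod>s=1..n. pochhammer (\<tau> s - of_nat (beta_under \<beta> s)) (beta_over n \<beta> s))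
             / of_nat (beta_fact n \<beta>) * z_pow n z \<beta>"

definition hterm :: "nat \<Rightarrow> (nat \<Rightarrow> real) \<Rightarrow> (nat \<Rightarrow> nat \<Rightarrow> real) \<Rightarrow> (nat \<Rightarrow> nat \<Rightarrow> nat) \<Rightarrow> real" where
  "hterm n T w \<beta> = (\<Prod>s=1..n. pochhammer (T s + of_nat (beta_under \<beta> s)) (beta_over n \<beta> s))
             / of_nat (beta_fact n \<beta>) * w_pow n w \<beta>"

lemma fterm_upd:
  assumes ma: "(m,a) \<in> idx_pairs n" and b0: "\<beta> m a = 0" and ua: "beta_under \<beta> a = 0"
  shows "fterm n \<tau> z (updb \<beta> m a c)
       = (pochhammer (\<tau> a) c / fact c * z m a ^ c) * fterm n (\<tau>(a := \<tau> a + of_nat c, m := \<tau> m - of_nat c)) z \<beta>"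
proof -
  note pf = pair_facts[OF ma]
  define \<tau>' where "\<tau>' = \<tau>(a := \<tau> a + of_nat c, m := \<tau> m - of_nat c)"
  have am: "a \<noteq> m" using pf by simp
  have A: "a \<in> {1..n}" using pf by simp
  let ?P = "\<lambda>s. pochhammer (\<tau> s - of_nat (beta_under (updb \<beta> m a c) s)) (beta_over n (updb \<beta> m a c) s)"
  let ?Q = "\<lambda>s. pochhammer (\<tau>' s - of_nat (beta_under \<beta> s)) (beta_over n \<beta> s)"
  have "(\<Prod>s=1..n. ?P s) = ?P a * (\<Prod>s\<in>{1..n}-{a}. ?P s)" using A by (simp add: prod.remove)
  also have "(\<Prod>s\<in>{1..n}-{a}. ?P s) = (\<Prod>s\<in>{1..n}-{a}. ?Q s)"
  proof (rule prod.cong[OF refl])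
    fix s assume s: "s \<in> {1..n} - {a}"
    show "?P s = ?Q s"
      using s am by (simp add: beta_under_upd[of m a n \<beta>, OF ma b0] beta_over_upd[of m a n \<beta>, OF ma b0] \<tau>'_def algebra_simps)
  qed
  also have "?P a = pochhammer (\<tau> a) (c + beta_over n \<beta> a)"
    using am ua by (simp add: beta_under_upd[of m a n \<beta>, OF ma b0] beta_over_upd[of m a n \<beta>, OF ma b0] add.commute)
  also have "\<dots> = pochhammer (\<tau> a) c * pochhammer (\<tau> a + of_nat c) (beta_over n \<beta> a)"
    by (rule pochhammer_product')
  also have "\<dots> = pochhammer (\<tau> a) c * ?Q a"
    using am ua by (simp add: \<tau>'_def)
  finally have "(\<Prod>s=1..n. ?P s) = pochhammer (\<tau> a) c * (?Q a * (\<Prod>s\<in>{1..n}-{a}. ?Q s))" by simp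
  also have "?Q a * (\<Prod>s\<in>{1..n}-{a}. ?Q s) = (\<Prod>s=1..n. ?Q s)" using A by (simp add: prod.remove)
  finally have "(\<Prod>s=1..n. ?P s) = pochhammer (\<tau> a) c * (\<Prod>s=1..n. ?Q s)" .
  then show ?thesis
    unfolding fterm_def \<tau>'_def[symmetric]
    by (simp add: beta_fact_upd[of m a n \<beta>, OF ma b0] z_pow_upd[of m a n \<beta>, OF ma b0] field_simps)
qed

lemma hterm_upd:
  assumes ma: "(m,a) \<in> idx_pairs n" and b0: "\<beta> m a = 0" and ua: "beta_under \<beta> a = 0"
  shows "hterm n T w (updb \<beta> m a c)
       = (pochhammer (T a) c / fact c * w m a ^ c) * hterm n (T(a := T a + of_nat c, m := T m + of_nat c)) w \<beta>"
proof -
  note pf = pair_facts[OF ma]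
  define T' where "T' = T(a := T a + of_nat c, m := T m + of_nat c)"
  have am: "a \<noteq> m" using pf by simp
  have A: "a \<in> {1..n}" using pf by simp
  let ?P = "\<lambda>s. pochhammer (T s + of_nat (beta_under (updb \<beta> m a c) s)) (beta_over n (updb \<beta> m a c) s)"
  let ?Q = "\<lambda>s. pochhammer (T' s + of_nat (beta_under \<beta> s)) (beta_over n \<beta> s)"
  have "(\<Prod>s=1..n. ?P s) = ?P a * (\<Prod>s\<in>{1..n}-{a}. ?P s)" using A by (simp add: prod.remove)
  also have "(\<Prod>s\<in>{1..n}-{a}. ?P s) = (\<Prod>s\<in>{1..n}-{a}. ?Q s)"
  proof (rule prod.cong[OF refl])
    fix s assume s: "s \<in> {1..n} - {a}"
    show "?P s = ?Q s"
      using s am by (simp add: beta_under_upd[of m a n \<beta>, OF ma b0] beta_over_upd[of m a n \<beta>, OF ma b0] T'_def algebra_simps)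
  qed
  also have "?P a = pochhammer (T a) (c + beta_over n \<beta> a)"
    using am ua by (simp add: beta_under_upd[of m a n \<beta>, OF ma b0] beta_over_upd[of m a n \<beta>, OF ma b0] add.commute)
  also have "\<dots> = pochhammer (T a) c * pochhammer (T a + of_nat c) (beta_over n \<beta> a)"
    by (rule pochhammer_product')
  also have "\<dots> = pochhammer (T a) c * ?Q a"
    using am ua by (simp add: T'_def)
  finally have "(\<Prod>s=1..n. ?P s) = pochhammer (T a) c * (?Q a * (\<Prod>s\<in>{1..n}-{a}. ?Q s))" by simp
  also have "?Q a * (\<Prod>s\<in>{1..n}-{a}. ?Q s) = (\<Prod>s=1..n. ?Q s)" using A by (simp add: prod.remove)
  finally have "(\<Prod>s=1..n. ?P s) = pochhammer (T a) c * (\<Prod>s=1..n. ?Q s)" .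
  then show ?thesis
    unfolding hterm_def T'_def[symmetric]
    by (simp add: beta_fact_upd[of m a n \<beta>, OF ma b0] w_pow_upd[of m a n \<beta>, OF ma b0] field_simps)
qed



lemma poch_nonneg:
  fixes x :: real
  assumes "0 \<le> x"
  shows "0 \<le> pochhammer x n"
  using assms by (induction n) (auto simp: pochhammer_Suc)

lemma norm_poch_le:
  fixes t :: complex
  shows "norm (pochhammer (t - of_nat b) k) \<le> pochhammer (norm t + real b) k"
proof (induction k)
  case 0 then show ?case by simp
next
  case (Suc k)
  have "norm (t - of_nat b + of_nat k) \<le> norm t + real b + real k"
    by (rule order_trans[OF norm_triangle_ineq]) (auto intro!: order_trans[OF norm_triangle_ineq4])
  then have "norm (pochhammer (t - of_nat b) k) * norm (t - of_nat b + of_nat k)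
        \<le> pochhammer (norm t + real b) k * (norm t + real b + real k)"
    using Suc by (intro mult_mono) (auto intro!: poch_nonneg)
  then show ?case by (simp add: pochhammer_Suc norm_mult)
qed

lemma binom_real:
  fixes T x :: real
  assumes "T \<ge> 0" "0 \<le> x" "x < 1"
  shows "((\<lambda>c. pochhammer T c / fact c * x ^ c) has_sum (1 - x) powr (- T)) UNIV"
proof -
  have "(\<lambda>c. ((- T) gchoose c) * (- x) ^ c) sums (1 + (- x)) powr (- T)"
    using assms by (intro gen_binomial_real) auto
  moreover have "((- T) gchoose c) * (- x) ^ c = pochhammer T c / fact c * x ^ c" for c
  proof -
    have "((- T) gchoose c) * (- x) ^ c = ((-1) ^ c * (-1) ^ c) * (pochhammer T c / fact c * x ^ c)"
      by (simp add: gbinomial_pochhammer power_minus[of x] field_simps)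
    also have "(-1::real) ^ c * (-1) ^ c = 1" by (simp add: power_add[symmetric])
    finally show ?thesis by simp
  qed
  ultimately have "(\<lambda>c. pochhammer T c / fact c * x ^ c) sums (1 - x) powr (- T)" by simp
  then show ?thesis
    by (rule sums_nonneg_imp_has_sum) (use assms poch_nonneg[of T] in \<open>auto intro!: divide_nonneg_pos mult_nonneg_nonneg\<close>)
qed

lemma binom_complex:
  fixes t x :: complex
  assumes "norm x < 1"
  shows "((\<lambda>c. pochhammer t c / fact c * x ^ c) has_sum (1 - x) powr (- t)) UNIV"
proof -
  have "(\<lambda>c. ((- t) gchoose c) * (- x) ^ c) sums (1 + (- x)) powr (- t)"
    using assms by (intro gen_binomial_complex) auto
  moreover have "((- t) gchoose c) * (- x) ^ c = pochhammer t c / fact c * x ^ c" for c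
  proof -
    have "((- t) gchoose c) * (- x) ^ c = ((-1) ^ c * (-1) ^ c) * (pochhammer t c / fact c * x ^ c)"
      by (simp add: gbinomial_pochhammer power_minus[of x] field_simps)
    also have "(-1::complex) ^ c * (-1) ^ c = 1" by (simp add: power_add[symmetric])
    finally show ?thesis by simp
  qed
  ultimately have S: "(\<lambda>c. pochhammer t c / fact c * x ^ c) sums (1 - x) powr (- t)" by simp
  have R: "((\<lambda>c. pochhammer (norm t) c / fact c * norm x ^ c) has_sum (1 - norm x) powr (- norm t)) UNIV"
    using assms by (intro binom_real) auto
  have Sm: "summable (\<lambda>c. pochhammer (norm t) c / fact c * norm x ^ c)"
    using has_sum_imp_sums[OF R] by (simp add: sums_iff)
  have B: "\<forall>c\<ge>0. norm (norm (pochhammer t c / fact c * x ^ c)) \<le> pochhammer (norm t) c / fact c * norm x ^ c"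
    using norm_poch_le[of t 0]
    by (simp add: norm_mult norm_divide norm_power divide_right_mono mult_right_mono)
  have "summable (\<lambda>c. norm (pochhammer t c / fact c * x ^ c))"
    by (rule summable_comparison_test[OF _ Sm]) (use B in blast)
  then show ?thesis using S by (rule norm_summable_imp_has_sum)
qed

lemma cpowr_mult:
  fixes w u a :: complex
  assumes "Re w > 0" "Re u > 0"
  shows "(w * u) powr a = w powr a * u powr a"
proof -
  have nz: "w \<noteq> 0" "u \<noteq> 0" using assms by auto
  have "\<bar>Im (Ln w)\<bar> < pi/2" "\<bar>Im (Ln u)\<bar> < pi/2" using assms Re_Ln_pos_lt_imp by auto
  then have "Ln (w * u) = Ln w + Ln u" using nz by (intro Ln_times_simple) auto
  then show ?thesis using nz by (simp add: powr_def exp_add distrib_left)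
qed

lemma cpowr_shift:
  fixes L t :: complex and c :: nat
  assumes "L \<noteq> 0"
  shows "L powr (- (t + of_nat c)) = L powr (- t) * inverse L ^ c"
    and "L powr (- (t - of_nat c)) = L powr (- t) * L ^ c"
proof -
  have e1: "- (t + of_nat c) = - t + - of_nat c" by simp
  have "L powr (- (t + of_nat c)) = L powr (- t) * L powr (- of_nat c)"
    unfolding e1 by (rule powr_add)
  also have "L powr (- of_nat c) = inverse (L powr of_nat c)" by (rule powr_minus)
  finally show "L powr (- (t + of_nat c)) = L powr (- t) * inverse L ^ c"
    using assms by (simp add: powr_nat' power_inverse)
  have e2: "- (t - of_nat c) = - t + of_nat c" by simp
  have "L powr (- (t - of_nat c)) = L powr (- t) * L powr (of_nat c)"
    unfolding e2 by (rule powr_add)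
  then show "L powr (- (t - of_nat c)) = L powr (- t) * L ^ c" using assms by (simp add: powr_nat')
qed

lemma rpowr_shift:
  fixes M t :: real and c :: nat
  assumes "M > 0"
  shows "M powr (- (t + of_nat c)) = M powr (- t) * inverse M ^ c"
proof -
  have e1: "- (t + of_nat c) = - t + - of_nat c" by simp
  have "M powr (- (t + of_nat c)) = M powr (- t) * M powr (- of_nat c)"
    unfolding e1 by (rule powr_add)
  also have "M powr (- of_nat c) = inverse (M powr of_nat c)" by (rule powr_minus)
  finally show ?thesis using assms by (simp add: powr_realpow power_inverse)
qed

lemma Lf_cong:
  assumes "\<And>j k. r \<le> k \<Longrightarrow> k < j \<Longrightarrow> j \<le> n \<Longrightarrow> z j k = z' j k"
  shows "Lf n z r = Lf n z' r"
  using assms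
proof (induction "n - r" arbitrary: r rule: less_induct)
  case less
  show ?case
  proof (cases "n \<le> r")
    case True then show ?thesis by (simp add: Lf.simps[of n _ r])
  next
    case False
    have "(\<Sum>m\<in>{r<..n}. z m r * Lf n z m) = (\<Sum>m\<in>{r<..n}. z' m r * Lf n z' m)"
    proof (rule sum.cong[OF refl])
      fix m assume m: "m \<in> {r<..n}"
      have "Lf n z m = Lf n z' m" using m less.prems by (intro less.hyps) auto
      moreover have "z m r = z' m r" using m less.prems by auto
      ultimately show "z m r * Lf n z m = z' m r * Lf n z' m" by simp
    qed
    then show ?thesis by (simp add: Lf.simps[of n _ r])
  qed
qed

lemma Mf_cong:
  assumes "\<And>j k. r \<le> k \<Longrightarrow> k < j \<Longrightarrow> j \<le> n \<Longrightarrow> w j k = w' j k"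
  shows "Mf n w r = Mf n w' r"
  using assms
proof (induction "n - r" arbitrary: r rule: less_induct)
  case less
  show ?case
  proof (cases "n \<le> r")
    case True then show ?thesis by (simp add: Mf.simps[of n _ r])
  next
    case False
    have "(\<Sum>m\<in>{r<..n}. w m r / Mf n w m) = (\<Sum>m\<in>{r<..n}. w' m r / Mf n w' m)"
    proof (rule sum.cong[OF refl])
      fix m assume m: "m \<in> {r<..n}"
      have "Mf n w m = Mf n w' m" using m less.prems by (intro less.hyps) auto
      moreover have "w m r = w' m r" using m less.prems by auto
      ultimately show "w m r / Mf n w m = w' m r / Mf n w' m" by simp
    qed
    then show ?thesis by (simp add: Mf.simps[of n _ r])
  qed
qed

lemma Lf_bound:
  assumes z: "\<And>j k. (j,k) \<in> idx_pairs n \<Longrightarrow> norm (z j k) \<le> dlt n" and r: "1 \<le> r"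
  shows "norm (Lf n z r - 1) \<le> 1/4"
  using r
proof (induction "n - r" arbitrary: r rule: less_induct)
  case less
  show ?case
  proof (cases "n \<le> r")
    case True then show ?thesis by (simp add: Lf.simps[of n _ r])
  next
    case False
    have "norm (\<Sum>m\<in>{r<..n}. z m r * Lf n z m) \<le> (\<Sum>m\<in>{r<..n}. dlt n * (5/4))"
    proof (rule order_trans[OF norm_sum sum_mono])
      fix m assume m: "m \<in> {r<..n}"
      have "norm (Lf n z m - 1) \<le> 1/4" using m less.prems by (intro less.hyps) auto
      then have "norm (Lf n z m) \<le> 5/4" using norm_triangle_ineq2[of "Lf n z m" 1] by simp
      moreover have "norm (z m r) \<le> dlt n" using m less.prems by (intro z) (auto simp: idx_pairs_def)
      ultimately show "norm (z m r * Lf n z m) \<le> dlt n * (5/4)"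
        unfolding norm_mult using dlt_pos[of n] by (intro mult_mono) auto
    qed
    also have "\<dots> = real (n - r) * dlt n * (5/4)" by simp
    also have "\<dots> \<le> real n * dlt n * (5/4)" using dlt_pos[of n] by (intro mult_right_mono) auto
    also have "\<dots> \<le> 1/4" using n_dlt[of n] by linarith
    finally show ?thesis using False by (simp add: Lf.simps[of n _ r])
  qed
qed

lemma Mf_bound:
  assumes w: "\<And>j k. (j,k) \<in> idx_pairs n \<Longrightarrow> 0 \<le> w j k \<and> w j k \<le> dlt n" and r: "1 \<le> r"
  shows "3/4 \<le> Mf n w r \<and> Mf n w r \<le> 1"
  using r
proof (induction "n - r" arbitrary: r rule: less_induct)
  case less
  show ?case
  proof (cases "n \<le> r")
    case True then show ?thesis by (simp add: Mf.simps[of n _ r])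
  next
    case False
    have b: "0 \<le> w m r / Mf n w m \<and> w m r / Mf n w m \<le> dlt n * 2" if m: "m \<in> {r<..n}" for m
    proof -
      have M: "3/4 \<le> Mf n w m" using m less.prems less.hyps[of m] by auto
      have W: "0 \<le> w m r" "w m r \<le> dlt n" using m less.prems w[of m r] by (auto simp: idx_pairs_def)
      have "w m r / Mf n w m \<le> w m r / (3/4)" using M W by (intro divide_left_mono) auto
      also have "\<dots> \<le> dlt n * 2" using W by simp
      finally show ?thesis using M W by simp
    qed
    have "(\<Sum>m\<in>{r<..n}. w m r / Mf n w m) \<le> (\<Sum>m\<in>{r<..n}. dlt n * 2)" using b by (intro sum_mono) auto
    also have "\<dots> = real (n - r) * dlt n * 2" by simp
    also have "\<dots> \<le> real n * dlt n * 2" using dlt_pos[of n] by (intro mult_right_mono) auto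
    also have "\<dots> \<le> 1/4" using n_dlt[of n] by simp
    finally have "(\<Sum>m\<in>{r<..n}. w m r / Mf n w m) \<le> 1/4" .
    moreover have "0 \<le> (\<Sum>m\<in>{r<..n}. w m r / Mf n w m)" using b by (intro sum_nonneg) auto
    ultimately show ?thesis using False by (simp add: Mf.simps[of n _ r])
  qed
qed



lemma hterm_nonneg:
  assumes "\<And>s. 0 \<le> T s" "\<And>j k. (j,k) \<in> idx_pairs n \<Longrightarrow> 0 \<le> w j k"
  shows "0 \<le> hterm n T w \<beta>"
  unfolding hterm_def w_pow_def using assms
  by (intro mult_nonneg_nonneg divide_nonneg_nonneg prod_nonneg poch_nonneg)
     (auto simp: case_prod_unfold)

lemma fterm_norm_le:
  "norm (fterm n \<tau> z \<beta>) \<le> hterm n (\<lambda>s. norm (\<tau> s)) (\<lambda>j k. norm (z j k)) \<beta>"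
proof -
  have P: "norm (\<Prod>s=1..n. pochhammer (\<tau> s - of_nat (beta_under \<beta> s)) (beta_over n \<beta> s))
      \<le> (\<Prod>s=1..n. pochhammer (norm (\<tau> s) + of_nat (beta_under \<beta> s)) (beta_over n \<beta> s))"
    unfolding prod_norm[symmetric] by (intro prod_mono conjI norm_ge_zero norm_poch_le)
  have Z: "norm (z_pow n z \<beta>) = w_pow n (\<lambda>j k. norm (z j k)) \<beta>"
    unfolding z_pow_def w_pow_def prod_norm[symmetric] by (simp add: case_prod_unfold norm_power)
  have E: "norm (fterm n \<tau> z \<beta>) = norm (\<Prod>s=1..n. pochhammer (\<tau> s - of_nat (beta_under \<beta> s)) (beta_over n \<beta> s))
      / real (beta_fact n \<beta>) * w_pow n (\<lambda>j k. norm (z j k)) \<beta>"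
    unfolding fterm_def norm_mult norm_divide Z norm_of_nat ..
  have W: "0 \<le> w_pow n (\<lambda>j k. norm (z j k)) \<beta>"
    unfolding w_pow_def by (auto simp: case_prod_unfold intro!: prod_nonneg)
  show ?thesis
    unfolding E hterm_def
    by (rule mult_right_mono[OF divide_right_mono[OF P] W]) simp
qed

lemma zr_empty: "zr {} z = (\<lambda>j k. 0)"
  by (simp add: zr_def)

lemma Lf_zero: "Lf n (\<lambda>j k. 0) r = 1"
  by (simp add: Lf.simps[of n _ r])

lemma Mf_zero: "Mf n (\<lambda>j k. 0) r = 1"
  by (simp add: Mf.simps[of n _ r])

lemma GS_empty: "GS {} = {\<lambda>j k. 0}"
  by (auto simp: GS_def)

lemma beta_zero:
  "beta_under (\<lambda>j k. 0) s = 0" "beta_over n (\<lambda>j k. 0) s = 0" "beta_fact n (\<lambda>j k. 0) = 1"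
  by (simp_all add: beta_under_def beta_over_def beta_fact_def)

lemma row_empty:
  assumes "\<beta> \<in> GS S" "\<And>j k. (j,k) \<in> S \<Longrightarrow> a \<le> k"
  shows "beta_under \<beta> a = 0"
proof -
  have "\<beta> a r = 0" if "r \<in> {1..<a}" for r
    using assms that by (force simp: GS_def)
  then show ?thesis by (simp add: beta_under_def)
qed

lemma zr_bounds:
  assumes "S \<subseteq> idx_pairs n"
  shows "(j,k) \<in> idx_pairs n \<Longrightarrow> norm (zr S z j k) \<le> norm (z j k)"
  by (simp add: zr_def)

lemma Lf_split:
  assumes S: "S \<subseteq> idx_pairs n" and ma: "(m,a) \<in> S" and amin: "\<And>j k. (j,k) \<in> S \<Longrightarrow> a \<le> k"
  shows "\<And>r. r \<noteq> a \<Longrightarrow> Lf n (zr S z) r = Lf n (zr (S - {(m,a)}) z) r"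
    and "Lf n (zr S z) a = Lf n (zr (S - {(m,a)}) z) a - z m a * Lf n (zr (S - {(m,a)}) z) m"
proof -
  have pf: "1 \<le> a" "a < m" "m \<le> n" using pair_facts S ma by auto
  show R: "Lf n (zr S z) r = Lf n (zr (S - {(m,a)}) z) r" if "r \<noteq> a" for r
  proof (cases "a < r")
    case True
    then show ?thesis by (intro Lf_cong) (auto simp: zr_def)
  next
    case False
    then have "r < a" using that by simp
    then have "zr S z j r = 0" "zr (S - {(m,a)}) z j r = 0" for j
      using amin by (force simp: zr_def)+
    then show ?thesis by (simp add: Lf.simps[of n _ r])
  qed
  have "(\<Sum>j\<in>{a<..n}. zr S z j a * Lf n (zr S z) j)
      = (\<Sum>j\<in>{a<..n}. zr (S - {(m,a)}) z j a * Lf n (zr (S - {(m,a)}) z) j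
           + (if j = m then z m a * Lf n (zr (S - {(m,a)}) z) m else 0))"
  proof (rule sum.cong[OF refl])
    fix j assume j: "j \<in> {a<..n}"
    then have "Lf n (zr S z) j = Lf n (zr (S - {(m,a)}) z) j" by (intro R) auto
    then show "zr S z j a * Lf n (zr S z) j = zr (S - {(m,a)}) z j a * Lf n (zr (S - {(m,a)}) z) j
           + (if j = m then z m a * Lf n (zr (S - {(m,a)}) z) m else 0)"
      using ma by (auto simp: zr_def)
  qed
  also have "\<dots> = (\<Sum>j\<in>{a<..n}. zr (S - {(m,a)}) z j a * Lf n (zr (S - {(m,a)}) z) j)
           + z m a * Lf n (zr (S - {(m,a)}) z) m"
    using pf by (simp add: sum.distrib)
  finally show "Lf n (zr S z) a = Lf n (zr (S - {(m,a)}) z) a - z m a * Lf n (zr (S - {(m,a)}) z) m"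
    using pf by (simp add: Lf.simps[of n _ a])
qed

lemma Mf_split:
  assumes S: "S \<subseteq> idx_pairs n" and ma: "(m,a) \<in> S" and amin: "\<And>j k. (j,k) \<in> S \<Longrightarrow> a \<le> k"
  shows "\<And>r. r \<noteq> a \<Longrightarrow> Mf n (zr S w) r = Mf n (zr (S - {(m,a)}) w) r"
    and "Mf n (zr S w) a = Mf n (zr (S - {(m,a)}) w) a - w m a / Mf n (zr (S - {(m,a)}) w) m"
proof -
  have pf: "1 \<le> a" "a < m" "m \<le> n" using pair_facts S ma by auto
  show R: "Mf n (zr S w) r = Mf n (zr (S - {(m,a)}) w) r" if "r \<noteq> a" for r
  proof (cases "a < r")
    case True
    then show ?thesis by (intro Mf_cong) (auto simp: zr_def)
  next
    case False
    then have "r < a" using that by simp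
    then have "zr S w j r = 0" "zr (S - {(m,a)}) w j r = 0" for j
      using amin by (force simp: zr_def)+
    then show ?thesis by (simp add: Mf.simps[of n _ r])
  qed
  have "(\<Sum>j\<in>{a<..n}. zr S w j a / Mf n (zr S w) j)
      = (\<Sum>j\<in>{a<..n}. zr (S - {(m,a)}) w j a / Mf n (zr (S - {(m,a)}) w) j
           + (if j = m then w m a / Mf n (zr (S - {(m,a)}) w) m else 0))"
  proof (rule sum.cong[OF refl])
    fix j assume j: "j \<in> {a<..n}"
    then have "Mf n (zr S w) j = Mf n (zr (S - {(m,a)}) w) j" by (intro R) auto
    then show "zr S w j a / Mf n (zr S w) j = zr (S - {(m,a)}) w j a / Mf n (zr (S - {(m,a)}) w) j
           + (if j = m then w m a / Mf n (zr (S - {(m,a)}) w) m else 0)"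
      using ma by (auto simp: zr_def)
  qed
  also have "\<dots> = (\<Sum>j\<in>{a<..n}. zr (S - {(m,a)}) w j a / Mf n (zr (S - {(m,a)}) w) j)
           + w m a / Mf n (zr (S - {(m,a)}) w) m"
    using pf by (simp add: sum.distrib)
  finally show "Mf n (zr S w) a = Mf n (zr (S - {(m,a)}) w) a - w m a / Mf n (zr (S - {(m,a)}) w) m"
    using pf by (simp add: Mf.simps[of n _ a])
qed

lemma min_col:
  fixes A :: "(nat \<times> nat) set"
  assumes "finite A" "A \<noteq> {}"
  obtains m a where "(m,a) \<in> A" "\<And>j k. (j,k) \<in> A \<Longrightarrow> a \<le> k"
proof -
  let ?a = "Min (snd ` A)"
  have "?a \<in> snd ` A" using assms by (intro Min_in) auto
  then obtain m where "(m, ?a) \<in> A" by force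
  moreover have "?a \<le> k" if "(j,k) \<in> A" for j k
    using assms that by (intro Min_le) force+
  ultimately show ?thesis using that by blast
qed

lemma prod_two:
  fixes f :: "nat \<Rightarrow> 'a::comm_monoid_mult"
  assumes "a \<in> {1..n}" "m \<in> {1..n}" "a \<noteq> m"
  shows "(\<Prod>r=1..n. f r * (if r = a then A else 1) * (if r = m then B else 1)) = (\<Prod>r=1..n. f r) * A * B"
  using assms by (simp add: prod.distrib)



lemma dlt_le: "dlt n \<le> 1/8"
  by (simp add: dlt_def field_simps)

lemma main_R:
  fixes S :: "(nat \<times> nat) set" and w :: "nat \<Rightarrow> nat \<Rightarrow> real"
  assumes fin: "finite S"
    and wb: "\<And>j k. (j,k) \<in> idx_pairs n \<Longrightarrow> 0 \<le> w j k \<and> w j k \<le> dlt n"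
  shows "S \<subseteq> idx_pairs n \<longrightarrow> (\<forall>T. (\<forall>s. 0 \<le> T s) \<longrightarrow>
     (hterm n T w has_sum (\<Prod>r=1..n. Mf n (zr S w) r powr (- T r))) (GS S))"
  using fin
proof (induction S rule: finite_remove_induct)
  case empty
  show ?case
  proof (intro impI allI)
    fix T :: "nat \<Rightarrow> real"
    have h1: "hterm n T w (\<lambda>j k. 0) = 1" by (simp add: hterm_def beta_zero w_pow_def)
    show "(hterm n T w has_sum (\<Prod>r=1..n. Mf n (zr {} w) r powr (- T r))) (GS {})"
      using has_sum_finite[of "{\<lambda>j k. 0}" "hterm n T w"] h1
      by (simp add: GS_empty zr_empty Mf_zero)
  qed
next
  case (remove A)
  show ?case
  proof (intro impI allI)
    fix T :: "nat \<Rightarrow> real"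
    assume A: "A \<subseteq> idx_pairs n" and T: "\<forall>s. 0 \<le> T s"
    obtain m a where ma: "(m,a) \<in> A" and amin: "\<And>j k. (j,k) \<in> A \<Longrightarrow> a \<le> k"
      using min_col[OF remove.hyps(1,2)] by blast
    define S' where "S' = A - {(m,a)}"
    have S'sub: "S' \<subseteq> idx_pairs n" using A by (auto simp: S'_def)
    have IH: "\<And>T. \<forall>s. 0 \<le> T s \<Longrightarrow> (hterm n T w has_sum (\<Prod>r=1..n. Mf n (zr S' w) r powr (- T r))) (GS S')"
      using remove.IH[OF ma] S'sub unfolding S'_def by blast
    have pf: "1 \<le> a" "a < m" "m \<le> n" using pair_facts subsetD[OF A ma] by auto
    define M where "M = Mf n (zr S' w)"
    have wbz: "0 \<le> zr B w j k \<and> zr B w j k \<le> dlt n" if "(j,k) \<in> idx_pairs n" for B j k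
      using wb[OF that] dlt_pos[of n] by (auto simp: zr_def)
    have Mb: "3/4 \<le> M r \<and> M r \<le> 1" if "1 \<le> r" for r
      unfolding M_def using Mf_bound[OF wbz that] .
    have Mpos: "0 < M r" if "1 \<le> r" for r using Mb[OF that] by simp
    have wma: "0 \<le> w m a" "w m a \<le> dlt n" using wb[OF subsetD[OF A ma]] by auto
    define x where "x = w m a / (M a * M m)"
    have x0: "0 \<le> x" using wma Mpos[of a] Mpos[of m] pf unfolding x_def
      by (intro divide_nonneg_pos mult_pos_pos) auto
    have "x \<le> w m a / ((3/4) * (3/4))"
      unfolding x_def using Mb[of a] Mb[of m] pf wma
      by (intro divide_left_mono mult_mono) auto
    also have "\<dots> < 1" using wma dlt_le[of n] by simp
    finally have x1: "x < 1" .
    define P0 where "P0 = (\<Prod>r=1..n. M r powr (- T r))"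
    define T2 where "T2 c = T(a := T a + real c, m := T m + real c)" for c
    define V where "V c = (pochhammer (T a) c / fact c * w m a ^ c) * (\<Prod>r=1..n. M r powr (- T2 c r))" for c
    have inner: "((\<lambda>\<beta>. hterm n T w (updb \<beta> m a c)) has_sum V c) (GS S')" for c
    proof -
      have T2nn: "\<forall>s. 0 \<le> T2 c s" using T by (auto simp: T2_def)
      have "((\<lambda>\<beta>. (pochhammer (T a) c / fact c * w m a ^ c) * hterm n (T2 c) w \<beta>) has_sum V c) (GS S')"
        unfolding V_def M_def by (rule has_sum_cmult_right[OF IH[OF T2nn]])
      moreover have "hterm n T w (updb \<beta> m a c) = (pochhammer (T a) c / fact c * w m a ^ c) * hterm n (T2 c) w \<beta>"
        if b: "\<beta> \<in> GS S'" for \<beta>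
      proof -
        have b0: "\<beta> m a = 0" using b by (auto simp: GS_def S'_def)
        have ua: "beta_under \<beta> a = 0" using b amin by (intro row_empty[of _ S']) (auto simp: S'_def)
        show ?thesis unfolding T2_def by (rule hterm_upd[OF subsetD[OF A ma] b0 ua])
      qed
      ultimately show ?thesis by (subst has_sum_cong) auto
    qed
    have Vc: "V c = P0 * (pochhammer (T a) c / fact c * x ^ c)" for c
    proof -
      have "(\<Prod>r=1..n. M r powr (- T2 c r)) = (\<Prod>r=1..n. M r powr (- T r) * (if r = a then inverse (M a) ^ c else 1) * (if r = m then inverse (M m) ^ c else 1))"
      proof (rule prod.cong[OF refl])
        fix r assume r: "r \<in> {1..n}"
        show "M r powr (- T2 c r) = M r powr (- T r) * (if r = a then inverse (M a) ^ c else 1) * (if r = m then inverse (M m) ^ c else 1)"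
          using pf r rpowr_shift[OF Mpos, of r "T r" c] by (auto simp: T2_def)
      qed
      also have "\<dots> = P0 * inverse (M a) ^ c * inverse (M m) ^ c"
        unfolding P0_def using pf by (intro prod_two) auto
      finally have "(\<Prod>r=1..n. M r powr (- T2 c r)) = P0 * inverse (M a) ^ c * inverse (M m) ^ c" .
      then show ?thesis
        unfolding V_def x_def by (simp add: power_divide power_mult_distrib power_inverse field_simps)
    qed
    have outer: "(V has_sum P0 * (1 - x) powr (- T a)) UNIV"
    proof -
      have "((\<lambda>c. P0 * (pochhammer (T a) c / fact c * x ^ c)) has_sum P0 * (1 - x) powr (- T a)) UNIV"
        by (rule has_sum_cmult_right[OF binom_real]) (use T x0 x1 in auto)
      moreover have "V = (\<lambda>c. P0 * (pochhammer (T a) c / fact c * x ^ c))" by (rule ext) (rule Vc)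
      ultimately show ?thesis by simp
    qed
    have target: "(\<Prod>r=1..n. Mf n (zr A w) r powr (- T r)) = P0 * (1 - x) powr (- T a)"
    proof -
      have Ma0: "Mf n (zr A w) a = M a - w m a / M m"
        using Mf_split(2)[OF A ma amin] unfolding M_def S'_def by simp
      have Ma: "Mf n (zr A w) a = M a * (1 - x)"
        unfolding Ma0 x_def using Mpos[of a] Mpos[of m] pf by (simp add: field_simps)
      have "(\<Prod>r=1..n. Mf n (zr A w) r powr (- T r)) = (\<Prod>r=1..n. M r powr (- T r) * (if r = a then (1 - x) powr (- T a) else 1) * (if r = m then 1 else 1))"
      proof (rule prod.cong[OF refl])
        fix r assume r: "r \<in> {1..n}"
        show "Mf n (zr A w) r powr (- T r) = M r powr (- T r) * (if r = a then (1 - x) powr (- T a) else 1) * (if r = m then 1 else 1)"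
        proof (cases "r = a")
          case True
          then show ?thesis using Ma Mpos[of a] pf x1 by (simp add: powr_mult)
        next
          case False
          then show ?thesis unfolding M_def S'_def using Mf_split(1)[OF A ma amin False] by simp
        qed
      qed
      also have "\<dots> = P0 * (1 - x) powr (- T a) * 1"
        unfolding P0_def using pf by (intro prod_two) auto
      finally show ?thesis by simp
    qed
    show "(hterm n T w has_sum (\<Prod>r=1..n. Mf n (zr A w) r powr (- T r))) (GS A)"
      unfolding target
      by (rule peel_nonneg[OF ma _ inner[unfolded S'_def] outer]) (use T wb in \<open>auto intro!: hterm_nonneg\<close>)
  qed
qed



lemma fterm_summable:
  assumes "finite S" "S \<subseteq> idx_pairs n"
    and zb: "\<And>j k. (j,k) \<in> idx_pairs n \<Longrightarrow> norm (z j k) \<le> dlt n"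
  shows "fterm n \<tau> z summable_on GS S"
proof -
  have "(hterm n (\<lambda>s. norm (\<tau> s)) (\<lambda>j k. norm (z j k)) has_sum
          (\<Prod>r=1..n. Mf n (zr S (\<lambda>j k. norm (z j k))) r powr (- norm (\<tau> r)))) (GS S)"
    using main_R[of S n "\<lambda>j k. norm (z j k)"] assms by auto
  then have H: "hterm n (\<lambda>s. norm (\<tau> s)) (\<lambda>j k. norm (z j k)) summable_on GS S"
    by (rule has_sum_imp_summable)
  have B: "\<And>\<beta>. \<beta> \<in> GS S \<Longrightarrow> norm (fterm n \<tau> z \<beta>) \<le> hterm n (\<lambda>s. norm (\<tau> s)) (\<lambda>j k. norm (z j k)) \<beta>"
    by (rule fterm_norm_le)
  have "(\<lambda>\<beta>. norm (fterm n \<tau> z \<beta>)) summable_on GS S"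
    by (rule Infinite_Sum.abs_summable_on_comparison_test'[OF H B])
  then show ?thesis using summable_on_iff_abs_summable_on_complex by blast
qed

lemma main_C:
  fixes S :: "(nat \<times> nat) set" and z :: "nat \<Rightarrow> nat \<Rightarrow> complex"
  assumes fin: "finite S"
    and zb: "\<And>j k. (j,k) \<in> idx_pairs n \<Longrightarrow> norm (z j k) \<le> dlt n"
  shows "S \<subseteq> idx_pairs n \<longrightarrow> (\<forall>\<tau>.
     (fterm n \<tau> z has_sum (\<Prod>r=1..n. Lf n (zr S z) r powr (- \<tau> r))) (GS S))"
  using fin
proof (induction S rule: finite_remove_induct)
  case empty
  show ?case
  proof (intro impI allI)
    fix \<tau> :: "nat \<Rightarrow> complex"
    have h1: "fterm n \<tau> z (\<lambda>j k. 0) = 1" by (simp add: fterm_def beta_zero z_pow_def)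
    show "(fterm n \<tau> z has_sum (\<Prod>r=1..n. Lf n (zr {} z) r powr (- \<tau> r))) (GS {})"
      using has_sum_finite[of "{\<lambda>j k. 0}" "fterm n \<tau> z"] h1
      by (simp add: GS_empty zr_empty Lf_zero)
  qed
next
  case (remove A)
  show ?case
  proof (intro impI allI)
    fix \<tau> :: "nat \<Rightarrow> complex"
    assume A: "A \<subseteq> idx_pairs n"
    obtain m a where ma: "(m,a) \<in> A" and amin: "\<And>j k. (j,k) \<in> A \<Longrightarrow> a \<le> k"
      using min_col[OF remove.hyps(1,2)] by blast
    define S' where "S' = A - {(m,a)}"
    have S'sub: "S' \<subseteq> idx_pairs n" using A by (auto simp: S'_def)
    have IH: "\<And>\<tau>. (fterm n \<tau> z has_sum (\<Prod>r=1..n. Lf n (zr S' z) r powr (- \<tau> r))) (GS S')"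
      using remove.IH[OF ma] S'sub unfolding S'_def by blast
    have pf: "1 \<le> a" "a < m" "m \<le> n" using pair_facts subsetD[OF A ma] by auto
    define L where "L = Lf n (zr S' z)"
    have zbz: "norm (zr B z j k) \<le> dlt n" if "(j,k) \<in> idx_pairs n" for B j k
      using zb[OF that] dlt_pos[of n] by (auto simp: zr_def)
    have Lb: "norm (L r - 1) \<le> 1/4" if "1 \<le> r" for r
      unfolding L_def using Lf_bound[OF zbz that] .
    have Lre: "0 < Re (L r)" if "1 \<le> r" for r
    proof -
      have "\<bar>Re (L r - 1)\<bar> \<le> 1/4" using abs_Re_le_cmod[of "L r - 1"] Lb[OF that] by linarith
      then show ?thesis by (auto simp: abs_if split: if_splits)
    qed
    have Lnz: "L r \<noteq> 0" if "1 \<le> r" for r using Lre[OF that] by auto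
    have Lup: "norm (L r) \<le> 5/4" if "1 \<le> r" for r
      using Lb[OF that] norm_triangle_ineq2[of "L r" 1] by simp
    have Llo: "3/4 \<le> norm (L r)" if "1 \<le> r" for r
      using Lb[OF that] norm_triangle_ineq3[of "L r" 1] norm_minus_commute[of "L r" 1] by simp
    have zma: "norm (z m a) \<le> dlt n" using zb[OF subsetD[OF A ma]] .
    define x where "x = z m a * L m / L a"
    have "norm x \<le> dlt n * (5/4) / (3/4)"
      unfolding x_def norm_mult norm_divide using Llo[of a] Lup[of m] pf zma dlt_pos[of n]
      by (intro frac_le mult_mono) auto
    also have "\<dots> < 1" using dlt_le[of n] by simp
    finally have x1: "norm x < 1" .
    have re1x: "0 < Re (1 - x)"
      using abs_Re_le_cmod[of x] x1 by simp
    define P0 where "P0 = (\<Prod>r=1..n. L r powr (- \<tau> r))"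
    define \<tau>2 where "\<tau>2 c = \<tau>(a := \<tau> a + of_nat c, m := \<tau> m - of_nat c)" for c
    define V where "V c = (pochhammer (\<tau> a) c / fact c * z m a ^ c) * (\<Prod>r=1..n. L r powr (- \<tau>2 c r))" for c
    have inner: "((\<lambda>\<beta>. fterm n \<tau> z (updb \<beta> m a c)) has_sum V c) (GS S')" for c
    proof -
      have "((\<lambda>\<beta>. (pochhammer (\<tau> a) c / fact c * z m a ^ c) * fterm n (\<tau>2 c) z \<beta>) has_sum V c) (GS S')"
        unfolding V_def L_def by (rule has_sum_cmult_right[OF IH])
      moreover have "fterm n \<tau> z (updb \<beta> m a c) = (pochhammer (\<tau> a) c / fact c * z m a ^ c) * fterm n (\<tau>2 c) z \<beta>"
        if b: "\<beta> \<in> GS S'" for \<beta>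
      proof -
        have b0: "\<beta> m a = 0" using b by (auto simp: GS_def S'_def)
        have ua: "beta_under \<beta> a = 0" using b amin by (intro row_empty[of _ S']) (auto simp: S'_def)
        show ?thesis unfolding \<tau>2_def by (rule fterm_upd[OF subsetD[OF A ma] b0 ua])
      qed
      ultimately show ?thesis by (subst has_sum_cong) auto
    qed
    have Vc: "V c = P0 * (pochhammer (\<tau> a) c / fact c * x ^ c)" for c
    proof -
      have "(\<Prod>r=1..n. L r powr (- \<tau>2 c r)) = (\<Prod>r=1..n. L r powr (- \<tau> r) * (if r = a then inverse (L a) ^ c else 1) * (if r = m then L m ^ c else 1))"
      proof (rule prod.cong[OF refl])
        fix r assume r: "r \<in> {1..n}"
        show "L r powr (- \<tau>2 c r) = L r powr (- \<tau> r) * (if r = a then inverse (L a) ^ c else 1) * (if r = m then L m ^ c else 1)"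
          using pf r cpowr_shift[OF Lnz, of r "\<tau> r" c] by (auto simp: \<tau>2_def)
      qed
      also have "\<dots> = P0 * inverse (L a) ^ c * L m ^ c"
        unfolding P0_def using pf by (intro prod_two) auto
      finally have "(\<Prod>r=1..n. L r powr (- \<tau>2 c r)) = P0 * inverse (L a) ^ c * L m ^ c" .
      then show ?thesis
        unfolding V_def x_def by (simp add: power_divide power_mult_distrib power_inverse field_simps)
    qed
    have outer: "(V has_sum P0 * (1 - x) powr (- \<tau> a)) UNIV"
    proof -
      have "((\<lambda>c. P0 * (pochhammer (\<tau> a) c / fact c * x ^ c)) has_sum P0 * (1 - x) powr (- \<tau> a)) UNIV"
        by (rule has_sum_cmult_right[OF binom_complex[OF x1]])
      moreover have "V = (\<lambda>c. P0 * (pochhammer (\<tau> a) c / fact c * x ^ c))" by (rule ext) (rule Vc)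
      ultimately show ?thesis by simp
    qed
    have target: "(\<Prod>r=1..n. Lf n (zr A z) r powr (- \<tau> r)) = P0 * (1 - x) powr (- \<tau> a)"
    proof -
      have La0: "Lf n (zr A z) a = L a - z m a * L m"
        using Lf_split(2)[OF A ma amin] unfolding L_def S'_def by simp
      have La: "Lf n (zr A z) a = L a * (1 - x)"
        unfolding La0 x_def using Lnz[of a] pf by (simp add: field_simps)
      have "(\<Prod>r=1..n. Lf n (zr A z) r powr (- \<tau> r)) = (\<Prod>r=1..n. L r powr (- \<tau> r) * (if r = a then (1 - x) powr (- \<tau> a) else 1) * (if r = m then 1 else 1))"
      proof (rule prod.cong[OF refl])
        fix r assume r: "r \<in> {1..n}"
        show "Lf n (zr A z) r powr (- \<tau> r) = L r powr (- \<tau> r) * (if r = a then (1 - x) powr (- \<tau> a) else 1) * (if r = m then 1 else 1)"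
        proof (cases "r = a")
          case True
          then show ?thesis using La cpowr_mult[OF Lre[of a] re1x] pf by simp
        next
          case False
          then show ?thesis unfolding L_def S'_def using Lf_split(1)[OF A ma amin False] by simp
        qed
      qed
      also have "\<dots> = P0 * (1 - x) powr (- \<tau> a) * 1"
        unfolding P0_def using pf by (intro prod_two) auto
      finally show ?thesis by simp
    qed
    have sm: "fterm n \<tau> z summable_on GS A"
      by (rule fterm_summable[OF remove.hyps(1) A zb])
    show "(fterm n \<tau> z has_sum (\<Prod>r=1..n. Lf n (zr A z) r powr (- \<tau> r))) (GS A)"
      unfolding target by (rule peel[OF ma sm inner[unfolded S'_def] outer])
  qed
qed



lemma prod_drop_last:
  fixes f :: "nat \<Rightarrow> 'a::comm_monoid_mult"
  assumes "f n = 1"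
  shows "(\<Prod>s=1..n. f s) = (\<Prod>s=1..n-1. f s)"
proof (cases n)
  case 0 then show ?thesis by simp
next
  case (Suc k)
  then show ?thesis using assms by (simp add: prod.cl_ivl_Suc)
qed

theorem mainTheorem6:
  fixes n :: nat and \<tau> :: "nat \<Rightarrow> complex"
  shows "\<exists>\<epsilon>>0. \<forall>z :: nat \<Rightarrow> nat \<Rightarrow> complex.
     (\<forall>j k. (j,k) \<in> idx_pairs n \<longrightarrow> norm (z j k) < \<epsilon>) \<longrightarrow>
     ((\<lambda>\<beta>. (\<Prod>s=1..n-1. pochhammer (\<tau> s - of_nat (beta_under \<beta> s)) (beta_over n \<beta> s))
             / of_nat (beta_fact n \<beta>) * z_pow n z \<beta>)
        has_sum (\<Prod>r=1..n-1. (\<Sum>s=r..n. path_poly z r s) powr (- \<tau> r))) (Gamma_A n)"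
proof (intro exI[of _ "dlt n"] conjI allI impI)
  show "0 < dlt n" by (rule dlt_pos)
  fix z :: "nat \<Rightarrow> nat \<Rightarrow> complex"
  assume zl: "\<forall>j k. (j,k) \<in> idx_pairs n \<longrightarrow> norm (z j k) < dlt n"
  have zb: "\<And>j k. (j,k) \<in> idx_pairs n \<Longrightarrow> norm (z j k) \<le> dlt n"
    using zl by (simp add: less_imp_le)
  have H: "(fterm n \<tau> z has_sum (\<Prod>r=1..n. Lf n (zr (idx_pairs n) z) r powr (- \<tau> r))) (GS (idx_pairs n))"
    using main_C[of "idx_pairs n" n z, OF finite_idx_pairs zb] by blast
  have GG: "GS (idx_pairs n) = Gamma_A n" by (simp add: GS_def Gamma_A_def)
  have FT: "fterm n \<tau> z \<beta> = (\<Prod>s=1..n-1. pochhammer (\<tau> s - of_nat (beta_under \<beta> s)) (beta_over n \<beta> s))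
             / of_nat (beta_fact n \<beta>) * z_pow n z \<beta>" for \<beta>
  proof -
    have "beta_over n \<beta> n = 0" by (simp add: beta_over_def)
    then have "(\<Prod>s=1..n. pochhammer (\<tau> s - of_nat (beta_under \<beta> s)) (beta_over n \<beta> s))
        = (\<Prod>s=1..n-1. pochhammer (\<tau> s - of_nat (beta_under \<beta> s)) (beta_over n \<beta> s))"
      by (intro prod_drop_last) simp
    then show ?thesis by (simp add: fterm_def)
  qed
  have VAL: "(\<Prod>r=1..n. Lf n (zr (idx_pairs n) z) r powr (- \<tau> r))
      = (\<Prod>r=1..n-1. (\<Sum>s=r..n. path_poly z r s) powr (- \<tau> r))"
  proof -
    have "(\<Prod>r=1..n. Lf n (zr (idx_pairs n) z) r powr (- \<tau> r))
        = (\<Prod>r=1..n-1. Lf n (zr (idx_pairs n) z) r powr (- \<tau> r))"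
      by (intro prod_drop_last) (simp add: Lf.simps[of n _ n])
    also have "\<dots> = (\<Prod>r=1..n-1. (\<Sum>s=r..n. path_poly z r s) powr (- \<tau> r))"
    proof (rule prod.cong[OF refl])
      fix r assume r: "r \<in> {1..n-1}"
      have "Lf n (zr (idx_pairs n) z) r = Lf n z r"
        using r by (intro Lf_cong) (auto simp: zr_def idx_pairs_def)
      also have "\<dots> = (\<Sum>s=r..n. path_poly z r s)"
        using r by (intro path_sum_Lf[symmetric]) auto
      finally show "Lf n (zr (idx_pairs n) z) r powr (- \<tau> r) = (\<Sum>s=r..n. path_poly z r s) powr (- \<tau> r)"
        by simp
    qed
    finally show ?thesis .
  qed
  show "((\<lambda>\<beta>. (\<Prod>s=1..n-1. pochhammer (\<tau> s - of_nat (beta_under \<beta> s)) (beta_over n \<beta> s))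
             / of_nat (beta_fact n \<beta>) * z_pow n z \<beta>)
        has_sum (\<Prod>r=1..n-1. (\<Sum>s=r..n. path_poly z r s) powr (- \<tau> r))) (Gamma_A n)"
    using H unfolding GG VAL FT .
qed

end
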